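(* For every finite subset $B\subseteq A$, the set $\{b\in\mathrm{Cl}(B)\mid \mathrm{pr}_3(b)\neq0\}$ is finite.
   Context: Let $\langle P,\preccurlyeq,\preccurlyeq^\ast\rangle$ be a doubly ordered set: $\preccurlyeq$ a partial order on $P$, $\preccurlyeq^\ast$ a preorder on $P$, and $p\preccurlyeq q\Rightarrow p\preccurlyeq^\ast q$. Write $p\prec q$ for ($p\preccurlyeq q$ and $p\neq q$). For a quadruple $\langle x_0,x_1,x_2,x_3\rangle$ and $i<4$, $\mathrm{pr}_i(\langle x_0,x_1,x_2,x_3\rangle)=x_i$. Define recursively $A_0=\{\langle0,p,\varnothing,k\rangle\mid p\in P,k\in\omega\}$ and $A_{n+1}=A_n\cup\{\langle n+1,q,a,0\rangle\mid q\in P,a\in A_n,\mathrm{pr}_1(a)\prec q\}\cup\{\langle n+1,q,a,k\rangle\mid q\in P,a\in A_n,\mathrm{pr}_1(a)\not\preccurlyeq q,\mathrm{pr}_1(a)\preccurlyeq^\ast q,k\in\omega\}$; let $A=\bigcup_{n}A_n$. A subset $C\subseteq A$ is closed if (i) for all $n\in\omega$, all $a\in C\cap A_n$ and all $q\in P$ with $\mathrm{pr}_1(a)\prec q$, we have $\langle n+1,q,a,0\rangle\in C$, and (ii) for all $b\in C\setminus A_0$, $\mathrm{pr}_2(b)\in C$. For $B\subseteq A$, $\mathrm{Cl}(B)$ is the least closed subset of $A$ including $B$. *)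

theory Defs
  imports Main
begin

text \<open>Quadruples <n, p, a, k>; the third component is either the empty set
  (represented by None) or an earlier quadruple (Some a).\<close>
datatype 'p quad = Quad nat 'p "'p quad option" nat

primrec pr0 :: "'p quad \<Rightarrow> nat" where "pr0 (Quad n p a k) = n"
primrec pr1 :: "'p quad \<Rightarrow> 'p" where "pr1 (Quad n p a k) = p"
primrec pr2 :: "'p quad \<Rightarrow> 'p quad option" where "pr2 (Quad n p a k) = a"
primrec pr3 :: "'p quad \<Rightarrow> nat" where "pr3 (Quad n p a k) = k"

definition doubly_ordered :: "('p \<Rightarrow> 'p \<Rightarrow> bool) \<Rightarrow> ('p \<Rightarrow> 'p \<Rightarrow> bool) \<Rightarrow> bool" where
  "doubly_ordered le les \<longleftrightarrow>
     reflp le \<and> transp le \<and> antisymp le \<and> reflp les \<and> transp les \<and>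
     (\<forall>p q. le p q \<longrightarrow> les p q)"

primrec Alev :: "('p \<Rightarrow> 'p \<Rightarrow> bool) \<Rightarrow> ('p \<Rightarrow> 'p \<Rightarrow> bool) \<Rightarrow> nat \<Rightarrow> 'p quad set" where
  "Alev le les 0 = {Quad 0 p None k | p k. True}"
| "Alev le les (Suc n) = Alev le les n
     \<union> {Quad (Suc n) q (Some a) 0 | q a. a \<in> Alev le les n \<and> le (pr1 a) q \<and> pr1 a \<noteq> q}
     \<union> {Quad (Suc n) q (Some a) k | q a k. a \<in> Alev le les n \<and> \<not> le (pr1 a) q \<and> les (pr1 a) q}"

definition Aset :: "('p \<Rightarrow> 'p \<Rightarrow> bool) \<Rightarrow> ('p \<Rightarrow> 'p \<Rightarrow> bool) \<Rightarrow> 'p quad set" where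
  "Aset le les = (\<Union>n. Alev le les n)"

definition closed_set :: "('p \<Rightarrow> 'p \<Rightarrow> bool) \<Rightarrow> ('p \<Rightarrow> 'p \<Rightarrow> bool) \<Rightarrow> 'p quad set \<Rightarrow> bool" where
  "closed_set le les C \<longleftrightarrow> C \<subseteq> Aset le les \<and>
     (\<forall>n a q. a \<in> C \<inter> Alev le les n \<and> le (pr1 a) q \<and> pr1 a \<noteq> q
        \<longrightarrow> Quad (Suc n) q (Some a) 0 \<in> C) \<and>
     (\<forall>b \<in> C - Alev le les 0. \<forall>a. pr2 b = Some a \<longrightarrow> a \<in> C)"

definition Cl :: "('p \<Rightarrow> 'p \<Rightarrow> bool) \<Rightarrow> ('p \<Rightarrow> 'p \<Rightarrow> bool) \<Rightarrow> 'p quad set \<Rightarrow> 'p quad set" where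
  "Cl le les B = \<Inter>{C. closed_set le les C \<and> B \<subseteq> C}"

end

theory Submission
  imports Defs
begin

definition Rp :: "('p quad \<times> 'p quad) set" where
  "Rp = {(a,b). pr2 b = Some a}"

definition Down :: "'p quad set \<Rightarrow> 'p quad set" where
  "Down B = {x. \<exists>b\<in>B. (x,b) \<in> Rp\<^sup>*}"

inductive_set Dset :: "('p \<Rightarrow> 'p \<Rightarrow> bool) \<Rightarrow> ('p \<Rightarrow> 'p \<Rightarrow> bool) \<Rightarrow> 'p quad set \<Rightarrow> 'p quad set"
  for le les B where
  base: "x \<in> Down B \<Longrightarrow> x \<in> Dset le les B"
| step: "a \<in> Dset le les B \<Longrightarrow> a \<in> Alev le les n \<Longrightarrow> le (pr1 a) q \<Longrightarrow> pr1 a \<noteq> q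
         \<Longrightarrow> Quad (Suc n) q (Some a) 0 \<in> Dset le les B"

lemma anc_finite: "finite {x. (x,b) \<in> Rp\<^sup>*}"
proof (induction b)
  case (Quad n p a k)
  have "{x. (x, Quad n p a k) \<in> Rp\<^sup>*} \<subseteq> insert (Quad n p a k) (\<Union>y\<in>set_option a. {x. (x,y) \<in> Rp\<^sup>*})"
  proof
    fix x assume "x \<in> {x. (x, Quad n p a k) \<in> Rp\<^sup>*}"
    then have "(x, Quad n p a k) \<in> Rp\<^sup>*" by simp
    then show "x \<in> insert (Quad n p a k) (\<Union>y\<in>set_option a. {x. (x,y) \<in> Rp\<^sup>*})"
      by (cases rule: rtranclE) (auto simp: Rp_def)
  qed
  moreover have "finite (insert (Quad n p a k) (\<Union>y\<in>set_option a. {x. (x,y) \<in> Rp\<^sup>*}))"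
    using Quad by auto
  ultimately show ?case by (rule finite_subset)
qed

lemma Down_finite: "finite B \<Longrightarrow> finite (Down B)"
proof -
  assume "finite B"
  have "Down B = (\<Union>b\<in>B. {x. (x,b) \<in> Rp\<^sup>*})" unfolding Down_def by auto
  then show ?thesis using \<open>finite B\<close> anc_finite by auto
qed

lemma Alev_pr2: "b \<in> Alev le les n \<Longrightarrow> pr2 b = Some a \<Longrightarrow> \<exists>m. a \<in> Alev le les m"
proof (induction n arbitrary: b)
  case 0 then show ?case by auto
next
  case (Suc n) then show ?case by auto
qed

lemma Aset_pr2: "b \<in> Aset le les \<Longrightarrow> pr2 b = Some a \<Longrightarrow> a \<in> Aset le les"
proof -
  assume "b \<in> Aset le les" "pr2 b = Some a"
  then obtain n where "b \<in> Alev le les n" unfolding Aset_def by blast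
  then obtain m where "a \<in> Alev le les m" using Alev_pr2 \<open>pr2 b = Some a\<close> by blast
  then show ?thesis unfolding Aset_def by blast
qed

lemma Rp_Aset: "(x,b) \<in> Rp\<^sup>* \<Longrightarrow> b \<in> Aset le les \<Longrightarrow> x \<in> Aset le les"
proof (induction rule: converse_rtrancl_induct)
  case base then show ?case .
next
  case (step y z)
  then have "z \<in> Aset le les" by simp
  moreover have "pr2 z = Some y" using step(1) by (simp add: Rp_def)
  ultimately show ?case by (rule Aset_pr2)
qed

lemma Down_Aset: "B \<subseteq> Aset le les \<Longrightarrow> Down B \<subseteq> Aset le les"
proof
  fix x assume "B \<subseteq> Aset le les" "x \<in> Down B"
  then obtain b where "b \<in> B" "(x,b) \<in> Rp\<^sup>*" unfolding Down_def by blast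
  then show "x \<in> Aset le les" using Rp_Aset \<open>B \<subseteq> Aset le les\<close> by blast
qed

lemma Dset_Aset: "x \<in> Dset le les B \<Longrightarrow> B \<subseteq> Aset le les \<Longrightarrow> x \<in> Aset le les"
proof (induction rule: Dset.induct)
  case (base x) then show ?case using Down_Aset by blast
next
  case (step a n q)
  then have "Quad (Suc n) q (Some a) 0 \<in> {Quad (Suc n) q (Some a) 0 | q a. a \<in> Alev le les n \<and> le (pr1 a) q \<and> pr1 a \<noteq> q}" by blast
  then have "Quad (Suc n) q (Some a) 0 \<in> Alev le les (Suc n)" by simp
  then show ?case unfolding Aset_def by blast
qed

lemma Dset_pr2: "x \<in> Dset le les B \<Longrightarrow> pr2 x = Some a \<Longrightarrow> a \<in> Dset le les B"
proof (induction rule: Dset.induct)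
  case (base x)
  then obtain b where "b \<in> B" "(x,b) \<in> Rp\<^sup>*" unfolding Down_def by auto
  moreover have "(a,x) \<in> Rp" using base by (simp add: Rp_def)
  ultimately have "a \<in> Down B" unfolding Down_def by (blast intro: converse_rtrancl_into_rtrancl)
  then show ?case by (rule Dset.base)
next
  case (step a' n q) then show ?case by simp
qed

lemma Dset_closed: "B \<subseteq> Aset le les \<Longrightarrow> closed_set le les (Dset le les B)"
  unfolding closed_set_def
proof (intro conjI allI impI ballI)
  assume B: "B \<subseteq> Aset le les"
  show "Dset le les B \<subseteq> Aset le les" using Dset_Aset[OF _ B] by blast
  fix n a q assume "a \<in> Dset le les B \<inter> Alev le les n \<and> le (pr1 a) q \<and> pr1 a \<noteq> q"
  then show "Quad (Suc n) q (Some a) 0 \<in> Dset le les B" by (auto intro: Dset.step)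
next
  fix b a assume "b \<in> Dset le les B - Alev le les 0" "pr2 b = Some a"
  then show "a \<in> Dset le les B" using Dset_pr2 by blast
qed

lemma B_Dset: "B \<subseteq> Dset le les B"
  using Dset.base unfolding Down_def by blast

lemma Dset_pr3: "x \<in> Dset le les B \<Longrightarrow> pr3 x \<noteq> 0 \<Longrightarrow> x \<in> Down B"
  by (induction rule: Dset.induct) auto

theorem lemma2p2:
  fixes le les :: "'p \<Rightarrow> 'p \<Rightarrow> bool" and B :: "'p quad set"
  assumes "doubly_ordered le les"
    and "finite B" and "B \<subseteq> Aset le les"
  shows "finite {b \<in> Cl le les B. pr3 b \<noteq> 0}"
proof -
  have "Cl le les B \<subseteq> Dset le les B"
    unfolding Cl_def using Dset_closed[OF assms(3)] B_Dset by blast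
  then have "{b \<in> Cl le les B. pr3 b \<noteq> 0} \<subseteq> Down B" using Dset_pr3 by blast
  then show ?thesis using Down_finite[OF assms(2)] finite_subset by blast
qed

end
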